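(* Let $n\ge2$, $\mathbb{K}$ any field, $A_n=\mathbb{K}[x,y]/(y^{2n+3},\, x^ny^2-y^{n+2},\, x^{2n+1}-xy^{n+1})$, and let $B_n$ be the set of monomials $x^iy^j$ not divisible by any of $y^{2n+3}, xy^{n+3}, x^ny^2, x^{2n+1}$. For every monomial $x^iy^j\in\mathbb{K}[x,y]$ exactly one of the following holds: (1) $x^iy^j=0$ in $A_n$; this happens if and only if $x^iy^j$ is divisible by one of $y^{2n+3}, xy^{n+3}, x^{n+1}y^3, x^{2n+1}y^2, x^{3n+1}$; (2) $x^iy^j\in B_n$; (3) $x^iy^j\notin B_n$ and there is a unique monomial $x^{i'}y^{j'}\in B_n$ with $x^iy^j=x^{i'}y^{j'}$ in $A_n$; moreover, $x^iy^j$ and $x^{i'}y^{j'}$ occur in the same one of the relations (1)–(7) listed below. The relations are: (1) $y^{n+2}=x^ny^2$; (2) $y^{n+k+2}=x^ny^{k+2}$ for $1\le k\le n-2$; (3) $y^{2n+1}=x^ny^{n+1}=x^{3n}$; (4) $y^{2n+2}=x^ny^{n+2}=x^{2n}y^2=x^{3n}y$; (5) $x^ky^{n+2}=x^{n+k}y^2=x^{2n+k}y$ for $1\le k\le n-1$; (6) $xy^{n+1}=x^{2n+1}$; (7) $x^ky^{n+1}=x^{2n+k}$ for $2\le k\le n-1$ (each displayed chain with a fixed $k$ counts as one relation).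
   Context: It is a fact (shown in the paper) that the images of the monomials in $B_n$ form a basis of $A_n$ and that relations (1)–(7) hold in $A_n$; each monomial appearing in (1)–(7) occurs in exactly one of these relations. *)

theory Defs
  imports Main "HOL-Library.Poly_Mapping" "HOL-Library.Product_Plus"
begin

text \<open>Bivariate polynomials K[x,y]: finitely supported maps from exponent pairs (i,j)
  (standing for x^i y^j) to coefficients, with convolution product.\<close>
type_synonym 'k poly2 = "(nat \<times> nat) \<Rightarrow>\<^sub>0 'k"

definition mon :: "nat \<Rightarrow> nat \<Rightarrow> 'k::field poly2" where
  "mon i j = Poly_Mapping.single (i, j) 1"

definition idealA :: "nat \<Rightarrow> 'k::field poly2 set" where
  "idealA n = {a * mon 0 (2*n+3) + b * (mon n 2 - mon 0 (n+2)) + c * (mon (2*n+1) 0 - mon 1 (n+1))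
               | a b c. True}"

definition eqA :: "nat \<Rightarrow> 'k::field poly2 \<Rightarrow> 'k poly2 \<Rightarrow> bool" where
  "eqA n p q \<longleftrightarrow> p - q \<in> idealA n"

definition inB :: "nat \<Rightarrow> nat \<Rightarrow> nat \<Rightarrow> bool" where
  "inB n i j \<longleftrightarrow> \<not> (j \<ge> 2*n+3 \<or> (i \<ge> 1 \<and> j \<ge> n+3) \<or> (i \<ge> n \<and> j \<ge> 2) \<or> i \<ge> 2*n+1)"

definition zero_div :: "nat \<Rightarrow> nat \<Rightarrow> nat \<Rightarrow> bool" where
  "zero_div n i j \<longleftrightarrow> j \<ge> 2*n+3 \<or> (i \<ge> 1 \<and> j \<ge> n+3) \<or> (i \<ge> n+1 \<and> j \<ge> 3)
      \<or> (i \<ge> 2*n+1 \<and> j \<ge> 2) \<or> i \<ge> 3*n+1"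

text \<open>The relations (1)-(7); each relation (for fixed k) is the set of exponent pairs
  of the monomials occurring in it.\<close>
definition relations :: "nat \<Rightarrow> (nat \<times> nat) set set" where
  "relations n =
     {{(0, n+2), (n, 2)}}
   \<union> {{(0, n+k+2), (n, k+2)} | k. 1 \<le> k \<and> k \<le> n - 2}
   \<union> {{(0, 2*n+1), (n, n+1), (3*n, 0)}}
   \<union> {{(0, 2*n+2), (n, n+2), (2*n, 2), (3*n, 1)}}
   \<union> {{(k, n+2), (n+k, 2), (2*n+k, 1)} | k. 1 \<le> k \<and> k \<le> n - 1}
   \<union> {{(1, n+1), (2*n+1, 0)}}
   \<union> {{(k, n+1), (2*n+k, 0)} | k. 2 \<le> k \<and> k \<le> n - 1}"

end

theory Submission
  imports Defs
begin

definition nf :: "nat \<Rightarrow> nat \<Rightarrow> nat \<Rightarrow> (nat \<times> nat) option" where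
  "nf n i j = (if zero_div n i j then None else if inB n i j then Some (i,j)
     else if i = n then Some (0, n+j)
     else if j = 2 then (if i < 2*n then Some (i-n, n+2) else Some (0,2*n+2))
     else if j = 1 then (if i < 3*n then Some (i-2*n, n+2) else Some (0,2*n+2))
     else if j = 0 then (if i < 3*n then Some (i-2*n, n+1) else Some (0,2*n+1))
     else None)"

lemma compat1: "n \<ge> 2 \<Longrightarrow> nf n (u+n) (v+2) = nf n u (v+n+2)"
  unfolding nf_def zero_div_def inB_def by auto
lemma compat2: "n \<ge> 2 \<Longrightarrow> nf n (u+2*n+1) v = nf n (u+1) (v+n+1)"
  unfolding nf_def zero_div_def inB_def by auto
lemma compat0: "n \<ge> 2 \<Longrightarrow> nf n u (v+2*n+3) = None"
  unfolding nf_def zero_div_def inB_def by auto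
lemma nf_bound: "nf n i j = Some t \<Longrightarrow> i \<le> 3*n \<and> j \<le> 2*n+2"
  unfolding nf_def zero_div_def inB_def by (auto split: if_splits)

lemma mon_mult: "(mon i j :: 'k::field poly2) * mon k l = mon (i+k) (j+l)"
  unfolding mon_def by (simp add: mult_single)

lemma I_add: "p \<in> idealA n \<Longrightarrow> q \<in> idealA n \<Longrightarrow> p + q \<in> idealA n"
proof -
  assume "p \<in> idealA n" "q \<in> idealA n"
  then obtain a b c a' b' c' where
    p_eq: "p = a * mon 0 (2*n+3) + b * (mon n 2 - mon 0 (n+2)) + c * (mon (2*n+1) 0 - mon 1 (n+1))"
    and q_eq: "q = a' * mon 0 (2*n+3) + b' * (mon n 2 - mon 0 (n+2)) + c' * (mon (2*n+1) 0 - mon 1 (n+1))"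
    unfolding idealA_def by blast
  have "p + q = (a+a') * mon 0 (2*n+3) + (b+b') * (mon n 2 - mon 0 (n+2)) + (c+c') * (mon (2*n+1) 0 - mon 1 (n+1))"
    unfolding p_eq q_eq by (simp add: algebra_simps)
  then show ?thesis unfolding idealA_def by blast
qed

lemma I_mult: "q \<in> idealA n \<Longrightarrow> r * q \<in> idealA n"
proof -
  assume "q \<in> idealA n"
  then obtain a b c where
    q_eq: "q = a * mon 0 (2*n+3) + b * (mon n 2 - mon 0 (n+2)) + c * (mon (2*n+1) 0 - mon 1 (n+1))"
    unfolding idealA_def by blast
  have "r * q = (r*a) * mon 0 (2*n+3) + (r*b) * (mon n 2 - mon 0 (n+2)) + (r*c) * (mon (2*n+1) 0 - mon 1 (n+1))"
    unfolding q_eq by (simp add: algebra_simps)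
  then show ?thesis unfolding idealA_def by blast
qed

lemma I_zero: "0 \<in> idealA n"
  unfolding idealA_def by (rule CollectI, rule exI[of _ 0], rule exI[of _ 0], rule exI[of _ 0]) simp

lemma I_neg: "q \<in> idealA n \<Longrightarrow> - q \<in> idealA n"
  using I_mult[of q n "-1"] by simp

lemma eqA_refl: "eqA n p p" unfolding eqA_def using I_zero by simp
lemma eqA_sym: "eqA n p q \<Longrightarrow> eqA n q p" unfolding eqA_def using I_neg by fastforce
lemma eqA_trans [trans]: "eqA n p q \<Longrightarrow> eqA n q r \<Longrightarrow> eqA n p r"
  unfolding eqA_def using I_add by fastforce
lemma eqA_mult: "eqA n p q \<Longrightarrow> eqA n (r*p) (r*q)"
  unfolding eqA_def using I_mult by (fastforce simp: right_diff_distrib[symmetric])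

lemma G1: "eqA n (mon (u+n) (v+2) :: 'k::field poly2) (mon u (v+n+2))"
proof -
  have "(mon (u+n) (v+2) :: 'k poly2) - mon u (v+n+2) = 0 * mon 0 (2*n+3) + mon u v * (mon n 2 - mon 0 (n+2)) + 0 * (mon (2*n+1) 0 - mon 1 (n+1))"
    by (simp add: right_diff_distrib mon_mult add.assoc)
  then show ?thesis unfolding eqA_def idealA_def by blast
qed

lemma G2: "eqA n (mon (u+2*n+1) v :: 'k::field poly2) (mon (u+1) (v+n+1))"
proof -
  have "(mon (u+2*n+1) v :: 'k poly2) - mon (u+1) (v+n+1) = 0 * mon 0 (2*n+3) + 0 * (mon n 2 - mon 0 (n+2)) + mon u v * (mon (2*n+1) 0 - mon 1 (n+1))"
    by (simp add: right_diff_distrib mon_mult add.assoc)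
  then show ?thesis unfolding eqA_def idealA_def by blast
qed

lemma G0: "eqA n (mon u (v+2*n+3) :: 'k::field poly2) 0"
proof -
  have "(mon u (v+2*n+3) :: 'k poly2) - 0 = mon u v * mon 0 (2*n+3) + 0 * (mon n 2 - mon 0 (n+2)) + 0 * (mon (2*n+1) 0 - mon 1 (n+1))"
    by (simp add: mon_mult add.assoc)
  then show ?thesis unfolding eqA_def idealA_def by blast
qed

lemma G1': assumes "n \<le> i" "2 \<le> j" shows "eqA n (mon i j :: 'k::field poly2) (mon (i-n) (j+n))"
proof -
  obtain a b where ab: "i = a+n" "j = b+2" using assms by (metis add.commute le_Suc_ex)
  have "eqA n (mon (a+n) (b+2) :: 'k::field poly2) (mon a (b+n+2))" by (rule G1)
  moreover have "b+n+2 = b+2+n" by simp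
  ultimately show ?thesis unfolding ab by simp
qed
lemma G2': assumes "2*n+1 \<le> i" shows "eqA n (mon i j :: 'k::field poly2) (mon (i-2*n) (j+n+1))"
proof -
  have "eqA n (mon ((i-2*n-1)+2*n+1) j :: 'k::field poly2) (mon ((i-2*n-1)+1) (j+n+1))" by (rule G2)
  moreover have "(i-2*n-1)+2*n+1 = i" "(i-2*n-1)+1 = i-2*n" using assms by auto
  ultimately show ?thesis by simp
qed
lemma G2s: "1 \<le> i \<Longrightarrow> n+1 \<le> j \<Longrightarrow> eqA n (mon i j :: 'k::field poly2) (mon (i+2*n) (j-n-1))"
  using G2'[of n "i+2*n" "j-n-1", where 'k='k] by (auto intro: eqA_sym)
lemma G0': "2*n+3 \<le> j \<Longrightarrow> eqA n (mon i j :: 'k::field poly2) 0"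
  using G0[of n i "j-2*n-3", where 'k='k] by simp


lemma Za: assumes "n \<ge> 2" "1 \<le> i" "2*n+2 \<le> j" shows "eqA n (mon i j :: 'k::field poly2) 0"
proof -
  have "eqA n (mon i j :: 'k poly2) (mon (i+2*n) (j-n-1))" by (rule G2s) (use assms in auto)
  also have "eqA n \<dots> (mon (i+2*n-n) (j-n-1+n))" by (rule G1') (use assms in auto)
  also have "eqA n \<dots> (mon (i+2*n-n-n) (j-n-1+n+n))" by (rule G1') (use assms in auto)
  also have "eqA n \<dots> 0" by (rule G0') (use assms in auto)
  finally show ?thesis .
qed

lemma Zb: assumes "n \<ge> 2" "n+1 \<le> i" "n+2 \<le> j" shows "eqA n (mon i j :: 'k::field poly2) 0"
proof -
  have "eqA n (mon i j :: 'k poly2) (mon (i-n) (j+n))" by (rule G1') (use assms in auto)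
  also have "eqA n \<dots> 0" by (rule Za) (use assms in auto)
  finally show ?thesis .
qed

lemma Zc: assumes "n \<ge> 2" "2*n+1 \<le> i" "2 \<le> j" shows "eqA n (mon i j :: 'k::field poly2) 0"
proof -
  have "eqA n (mon i j :: 'k poly2) (mon (i-n) (j+n))" by (rule G1') (use assms in auto)
  also have "eqA n \<dots> 0" by (rule Zb) (use assms in auto)
  finally show ?thesis .
qed

lemma Zd: assumes "n \<ge> 2" "1 \<le> i" "n+3 \<le> j" shows "eqA n (mon i j :: 'k::field poly2) 0"
proof -
  have "eqA n (mon i j :: 'k poly2) (mon (i+2*n) (j-n-1))" by (rule G2s) (use assms in auto)
  also have "eqA n \<dots> 0" by (rule Zc) (use assms in auto)
  finally show ?thesis .
qed

lemma Ze: assumes "n \<ge> 2" "n+1 \<le> i" "3 \<le> j" shows "eqA n (mon i j :: 'k::field poly2) 0"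
proof -
  have "eqA n (mon i j :: 'k poly2) (mon (i-n) (j+n))" by (rule G1') (use assms in auto)
  also have "eqA n \<dots> 0" by (rule Zd) (use assms in auto)
  finally show ?thesis .
qed

lemma Zf: assumes "n \<ge> 2" "3*n+1 \<le> i" shows "eqA n (mon i j :: 'k::field poly2) 0"
proof -
  have "eqA n (mon i j :: 'k poly2) (mon (i-2*n) (j+n+1))" by (rule G2') (use assms in auto)
  also have "eqA n \<dots> 0" by (rule Ze) (use assms in auto)
  finally show ?thesis .
qed

lemma zero_red: assumes "n \<ge> 2" "zero_div n i j" shows "eqA n (mon i j :: 'k::field poly2) 0"
  using assms G0'[of n j i] Zd[of n i j] Ze[of n i j] Zc[of n i j] Zf[of n i j]
  unfolding zero_div_def by auto

lemma nonzero_red: assumes "n \<ge> 2" "\<not> zero_div n i j"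
  shows "\<exists>a b. nf n i j = Some (a,b) \<and> inB n a b \<and> eqA n (mon i j :: 'k::field poly2) (mon a b)"
proof (cases "inB n i j")
  case True
  then show ?thesis using assms eqA_refl unfolding nf_def by auto
next
  case nB: False
  show ?thesis
  proof (cases "i = n")
    case True
    then have "j \<ge> 2" using nB assms unfolding inB_def by auto
    then have "eqA n (mon i j :: 'k poly2) (mon 0 (n+j))" using True G1'[of n i j] by (simp add: add.commute)
    moreover have "nf n i j = Some (0, n+j)" "inB n 0 (n+j)" using True nB assms unfolding nf_def inB_def zero_div_def by auto
    ultimately show ?thesis by blast
  next
    case ni: False
    show ?thesis
    proof (cases "j = 2")
      case j2: True
      then have i: "n < i" "i \<le> 2*n" using nB ni assms unfolding inB_def zero_div_def by auto
      show ?thesis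
      proof (cases "i < 2*n")
        case True
        have "eqA n (mon i j :: 'k poly2) (mon (i-n) (n+2))" using j2 i G1'[of n i j] by (simp add: add.commute)
        moreover have "nf n i j = Some (i-n, n+2)" "inB n (i-n) (n+2)" using True j2 i nB ni assms unfolding nf_def inB_def zero_div_def by auto
        ultimately show ?thesis by blast
      next
        case False
        then have "i = 2*n" using i by auto
        have "eqA n (mon i j :: 'k poly2) (mon (i-n) (j+n))" using j2 i G1'[of n i j] by simp
        also have "eqA n \<dots> (mon (i-n-n) (j+n+n))" by (rule G1') (use j2 i \<open>i = 2*n\<close> in auto)
        finally have "eqA n (mon i j :: 'k poly2) (mon 0 (2*n+2))" using \<open>i = 2*n\<close> j2 by (simp add: mult_2)
        moreover have "nf n i j = Some (0, 2*n+2)" "inB n 0 (2*n+2)" using \<open>i = 2*n\<close> j2 nB ni assms unfolding nf_def inB_def zero_div_def by auto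
        ultimately show ?thesis by blast
      qed
    next
      case nj2: False
      then have j: "j \<le> 1" "2*n < i" "i \<le> 3*n" using nB ni assms unfolding inB_def zero_div_def by auto
      have e1: "eqA n (mon i j :: 'k poly2) (mon (i-2*n) (j+n+1))" by (rule G2') (use j in auto)
      show ?thesis
      proof (cases "i < 3*n")
        case True
        then have "nf n i j = Some (i-2*n, j+n+1)" "inB n (i-2*n) (j+n+1)"
          using j nj2 nB ni assms unfolding nf_def inB_def zero_div_def by auto
        then show ?thesis using e1 by blast
      next
        case False
        then have i3: "i = 3*n" using j by auto
        have "eqA n (mon (i-2*n) (j+n+1) :: 'k poly2) (mon (i-2*n-n) (j+n+1+n))" by (rule G1') (use j i3 in auto)
        moreover have "i-2*n-n = 0" "j+n+1+n = j+2*n+1" using i3 by auto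
        ultimately have "eqA n (mon i j :: 'k poly2) (mon 0 (j+2*n+1))" using e1 eqA_trans by metis
        moreover have "nf n i j = Some (0, j+2*n+1)" "inB n 0 (j+2*n+1)"
          using j nj2 nB ni assms i3 unfolding nf_def inB_def zero_div_def by auto
        ultimately show ?thesis by blast
      qed
    qed
  qed
qed


definition lam :: "nat \<Rightarrow> nat \<times> nat \<Rightarrow> 'k::field poly2 \<Rightarrow> 'k" where
  "lam n t p = (\<Sum>m\<in>{0..3*n}\<times>{0..2*n+2}. if nf n (fst m) (snd m) = Some t then Poly_Mapping.lookup p m else 0)"

lemma lam_add: "lam n t (p + q) = lam n t p + lam n t q"
  unfolding lam_def by (auto simp: lookup_add sum.distrib[symmetric] intro!: sum.cong)

lemma lam_diff: "lam n t (p - q) = lam n t p - lam n t q"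
  unfolding lam_def by (auto simp: lookup_minus sum_subtractf[symmetric] intro!: sum.cong)

lemma lam_single: "lam n t (Poly_Mapping.single m c) = (if nf n (fst m) (snd m) = Some t then c else 0)"
proof -
  have "lam n t (Poly_Mapping.single m c) =
        (\<Sum>m'\<in>{0..3*n}\<times>{0..2*n+2}. if m' = m then (if nf n (fst m) (snd m) = Some t then c else 0) else 0)"
    unfolding lam_def by (rule sum.cong) (auto simp: lookup_single when_def)
  also have "\<dots> = (if nf n (fst m) (snd m) = Some t then c else 0)"
    using nf_bound[of n "fst m" "snd m" t] by (cases m) (auto simp: sum.delta')
  finally show ?thesis .
qed

lemma lam_zero: "lam n t 0 = 0"
  using lam_diff[of n t 0 0] by simp

lemma update_eq: "k \<notin> Poly_Mapping.keys f \<Longrightarrow> Poly_Mapping.update k b f = f + Poly_Mapping.single k b"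
  by (rule poly_mapping_eqI) (auto simp: lookup_update lookup_add lookup_single when_def in_keys_iff)

lemma lam_gen:
  fixes G :: "'k::field poly2"
  assumes "\<And>m c. lam n t (Poly_Mapping.single m c * G) = 0"
  shows "lam n t (a * G) = 0"
proof (induction a rule: update_induct)
  case const then show ?case by (simp add: lam_zero)
next
  case (update f k b)
  then show ?case by (simp add: update_eq distrib_right lam_add assms)
qed

lemma lam_ideal: fixes p :: "'k::field poly2" assumes "n \<ge> 2" "p \<in> idealA n" shows "lam n t p = 0"
proof -
  obtain a b c where p: "p = a * mon 0 (2*n+3) + b * (mon n 2 - mon 0 (n+2)) + c * (mon (2*n+1) 0 - mon 1 (n+1))"
    using assms unfolding idealA_def by blast
  have 1: "lam n t (a * mon 0 (2*n+3)) = 0"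
  proof (rule lam_gen)
    fix m :: "nat \<times> nat" and d :: 'k
    show "lam n t (Poly_Mapping.single m d * mon 0 (2*n+3)) = 0"
      using compat0[OF assms(1), of "fst m" "snd m"]
      by (cases m) (simp add: mon_def mult_single lam_single add.assoc)
  qed
  have 2: "lam n t (b * (mon n 2 - mon 0 (n+2))) = 0"
  proof (rule lam_gen)
    fix m :: "nat \<times> nat" and d :: 'k
    show "lam n t (Poly_Mapping.single m d * (mon n 2 - mon 0 (n+2))) = 0"
      using compat1[OF assms(1), of "fst m" "snd m"]
      by (cases m) (simp add: mon_def mult_single lam_single lam_diff right_diff_distrib add.assoc)
  qed
  have 3: "lam n t (c * (mon (2*n+1) 0 - mon 1 (n+1))) = 0"
  proof (rule lam_gen)
    fix m :: "nat \<times> nat" and d :: 'k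
    show "lam n t (Poly_Mapping.single m d * (mon (2*n+1) 0 - mon 1 (n+1))) = 0"
      using compat2[OF assms(1), of "fst m" "snd m"]
      by (cases m) (simp add: mon_def mult_single lam_single lam_diff right_diff_distrib add.assoc add.commute)
  qed
  show ?thesis unfolding p lam_add using 1 2 3 by simp
qed

lemma lam_eqA: "n \<ge> 2 \<Longrightarrow> eqA n p q \<Longrightarrow> lam n t p = lam n t q"
  using lam_ideal[of n "p - q" t] unfolding eqA_def by (simp add: lam_diff)

lemma lam_mon: "lam n t (mon i j :: 'k::field poly2) = (if nf n i j = Some t then 1 else 0)"
  unfolding mon_def by (simp add: lam_single)

lemma inB_nf: "inB n i j \<Longrightarrow> nf n i j = Some (i,j)"
  unfolding nf_def inB_def zero_div_def by auto

lemma inB_nz: "inB n i j \<Longrightarrow> \<not> zero_div n i j"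
  unfolding inB_def zero_div_def by auto

lemma sep: assumes "n \<ge> 2" "inB n a b" "inB n c d" "eqA n (mon a b :: 'k::field poly2) (mon c d)"
  shows "(a,b) = (c,d)"
  using lam_eqA[OF assms(1) assms(4), of "(a,b)"] inB_nf[OF assms(2)] inB_nf[OF assms(3)]
  by (simp add: lam_mon split: if_splits)

lemma nz: assumes "n \<ge> 2" "\<not> zero_div n i j" shows "\<not> eqA n (mon i j :: 'k::field poly2) 0"
proof
  assume e: "eqA n (mon i j :: 'k::field poly2) 0"
  obtain a b where "nf n i j = Some (a,b)" using nonzero_red[OF assms, where 'k='k] by blast
  then show False using lam_eqA[OF assms(1) e, of "(a,b)"] by (simp add: lam_mon lam_zero)
qed


lemma rel1: "{(0, n+2), (n, 2)} \<in> relations n" unfolding relations_def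
  by (rule UnI1, rule UnI1, rule UnI1, rule UnI1, rule UnI1, rule UnI1, rule singletonI)
lemma rel2: "1 \<le> k \<Longrightarrow> k \<le> n-2 \<Longrightarrow> {(0, n+k+2), (n, k+2)} \<in> relations n" unfolding relations_def
  by (rule UnI1, rule UnI1, rule UnI1, rule UnI1, rule UnI1, rule UnI2, rule CollectI, rule exI[of _ k]) simp
lemma rel3: "{(0, 2*n+1), (n, n+1), (3*n, 0)} \<in> relations n" unfolding relations_def
  by (rule UnI1, rule UnI1, rule UnI1, rule UnI1, rule UnI2, rule singletonI)
lemma rel4: "{(0, 2*n+2), (n, n+2), (2*n, 2), (3*n, 1)} \<in> relations n" unfolding relations_def
  by (rule UnI1, rule UnI1, rule UnI1, rule UnI2, rule singletonI)
lemma rel5: "1 \<le> k \<Longrightarrow> k \<le> n-1 \<Longrightarrow> {(k, n+2), (n+k, 2), (2*n+k, 1)} \<in> relations n" unfolding relations_def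
  by (rule UnI1, rule UnI1, rule UnI2, rule CollectI, rule exI[of _ k]) simp
lemma rel6: "{(1, n+1), (2*n+1, 0)} \<in> relations n" unfolding relations_def
  by (rule UnI1, rule UnI2, rule singletonI)
lemma rel7: "2 \<le> k \<Longrightarrow> k \<le> n-1 \<Longrightarrow> {(k, n+1), (2*n+k, 0)} \<in> relations n" unfolding relations_def
  by (rule UnI2, rule CollectI, rule exI[of _ k]) simp

lemma bexI2: "X \<in> A \<Longrightarrow> a \<in> X \<Longrightarrow> b \<in> X \<Longrightarrow> \<exists>R\<in>A. a \<in> R \<and> b \<in> R" by blast

lemma rel_ex: assumes "n \<ge> 2" "\<not> inB n i j" "\<not> zero_div n i j" "nf n i j = Some t"
  shows "\<exists>R\<in>relations n. (i, j) \<in> R \<and> t \<in> R"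
proof -
  have nfd: "nf n i j = (if i = n then Some (0, n+j)
     else if j = 2 then (if i < 2*n then Some (i-n, n+2) else Some (0,2*n+2))
     else if j = 1 then (if i < 3*n then Some (i-2*n, n+2) else Some (0,2*n+2))
     else if j = 0 then (if i < 3*n then Some (i-2*n, n+1) else Some (0,2*n+1))
     else None)" using assms(2,3) unfolding nf_def by simp
  show ?thesis
  proof (cases "i = n")
    case True
    then have t: "t = (0, n+j)" and j: "2 \<le> j" "j \<le> n+2" using assms nfd unfolding inB_def zero_div_def by auto
    consider "j = 2" | "3 \<le> j" "j \<le> n" | "j = n+1" | "j = n+2" using j by linarith
    then show ?thesis
    proof cases
      case 1 then show ?thesis using True t by (intro bexI2[OF rel1]) auto
    next
      case 2 then show ?thesis using True t by (intro bexI2[OF rel2[of "j-2" n]]) auto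
    next
      case 3 then show ?thesis using True t by (intro bexI2[OF rel3]) auto
    next
      case 4 then show ?thesis using True t by (intro bexI2[OF rel4]) auto
    qed
  next
    case ni: False
    show ?thesis
    proof (cases "j = 2")
      case j2: True
      then have i: "n < i" "i \<le> 2*n" using assms ni unfolding inB_def zero_div_def by auto
      show ?thesis
      proof (cases "i < 2*n")
        case True
        then have t: "t = (i-n, n+2)" using nfd assms ni j2 by auto
        show ?thesis using True t i j2 by (intro bexI2[OF rel5[of "i-n" n]]) auto
      next
        case False
        then have t: "t = (0, 2*n+2)" using nfd assms ni j2 by auto
        show ?thesis using False t i j2 by (intro bexI2[OF rel4]) auto
      qed
    next
      case nj2: False
      then have j: "j \<le> 1" "2*n < i" "i \<le> 3*n" using assms ni unfolding inB_def zero_div_def by auto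
      show ?thesis
      proof (cases "j = 1")
        case j1: True
        show ?thesis
        proof (cases "i < 3*n")
          case True
          then have t: "t = (i-2*n, n+2)" using nfd assms ni j1 by auto
          show ?thesis using True t j j1 by (intro bexI2[OF rel5[of "i-2*n" n]]) auto
        next
          case False
          then have t: "t = (0, 2*n+2)" using nfd assms ni j1 by auto
          show ?thesis using False t j j1 by (intro bexI2[OF rel4]) auto
        qed
      next
        case False
        then have j0: "j = 0" using j by auto
        show ?thesis
        proof (cases "i < 3*n")
          case True
          then have t: "t = (i-2*n, n+1)" using nfd assms ni j0 by auto
          show ?thesis
          proof (cases "i = 2*n+1")
            case True
            then show ?thesis using True t j0 by (intro bexI2[OF rel6]) auto
          next
            case False
            then show ?thesis using \<open>i < 3*n\<close> t j j0
              by (intro bexI2[OF rel7[of "i-2*n" n]]) auto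
          qed
        next
          case False
          then have t: "t = (0, 2*n+1)" using nfd assms ni j0 by auto
          show ?thesis using False t j j0 by (intro bexI2[OF rel3]) auto
        qed
      qed
    qed
  qed
qed

theorem corollary2p5:
  fixes n :: nat
  assumes "n \<ge> 2"
  shows "\<forall>i j.
    (let P1 = eqA n (mon i j :: 'k::field poly2) 0;
         P2 = inB n i j;
         P3 = (\<not> inB n i j \<and>
               (\<exists>!p. inB n (fst p) (snd p) \<and> eqA n (mon i j :: 'k poly2) (mon (fst p) (snd p))) \<and>
               (\<forall>i' j'. inB n i' j' \<and> eqA n (mon i j :: 'k poly2) (mon i' j') \<longrightarrow>
                   (\<exists>R\<in>relations n. (i, j) \<in> R \<and> (i', j') \<in> R)))
     in ((P1 \<and> \<not> P2 \<and> \<not> P3) \<or> (\<not> P1 \<and> P2 \<and> \<not> P3) \<or> (\<not> P1 \<and> \<not> P2 \<and> P3))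
        \<and> (P1 \<longleftrightarrow> zero_div n i j))"
proof (intro allI)
  fix i j
  show "let P1 = eqA n (mon i j :: 'k::field poly2) 0;
         P2 = inB n i j;
         P3 = (\<not> inB n i j \<and>
               (\<exists>!p. inB n (fst p) (snd p) \<and> eqA n (mon i j :: 'k poly2) (mon (fst p) (snd p))) \<and>
               (\<forall>i' j'. inB n i' j' \<and> eqA n (mon i j :: 'k poly2) (mon i' j') \<longrightarrow>
                   (\<exists>R\<in>relations n. (i, j) \<in> R \<and> (i', j') \<in> R)))
     in ((P1 \<and> \<not> P2 \<and> \<not> P3) \<or> (\<not> P1 \<and> P2 \<and> \<not> P3) \<or> (\<not> P1 \<and> \<not> P2 \<and> P3))
        \<and> (P1 \<longleftrightarrow> zero_div n i j)"
  proof (cases "zero_div n i j")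
    case True
    have P1: "eqA n (mon i j :: 'k poly2) 0" using zero_red[OF assms True] .
    have nB: "\<not> inB n i j" using True inB_nz by blast
    have noP: "\<not> (\<exists>p. inB n (fst p) (snd p) \<and> eqA n (mon i j :: 'k poly2) (mon (fst p) (snd p)))"
    proof
      assume "\<exists>p. inB n (fst p) (snd p) \<and> eqA n (mon i j :: 'k poly2) (mon (fst p) (snd p))"
      then obtain a b where ab: "inB n a b" "eqA n (mon i j :: 'k poly2) (mon a b)" by auto
      then have "eqA n (mon a b :: 'k poly2) 0" using P1 eqA_sym eqA_trans by metis
      then show False using nz[OF assms inB_nz[OF ab(1)]] by blast
    qed
    then have noP1: "\<not> (\<exists>!p. inB n (fst p) (snd p) \<and> eqA n (mon i j :: 'k poly2) (mon (fst p) (snd p)))"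
      by blast
    show ?thesis unfolding Let_def using P1 nB noP1 True by simp
  next
    case nzd: False
    have nP1: "\<not> eqA n (mon i j :: 'k poly2) 0" using nz[OF assms nzd] .
    show ?thesis
    proof (cases "inB n i j")
      case True
      then show ?thesis unfolding Let_def using nP1 nzd by simp
    next
      case nB: False
      obtain a b where ab: "nf n i j = Some (a,b)" "inB n a b" "eqA n (mon i j :: 'k poly2) (mon a b)"
        using nonzero_red[OF assms nzd, where 'k='k] by blast
      have uniq: "\<And>c d. inB n c d \<Longrightarrow> eqA n (mon i j :: 'k poly2) (mon c d) \<Longrightarrow> (c,d) = (a,b)"
      proof -
        fix c d assume cd: "inB n c d" "eqA n (mon i j :: 'k poly2) (mon c d)"
        have "eqA n (mon c d :: 'k poly2) (mon a b)" using cd(2) ab(3) eqA_sym eqA_trans by metis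
        then show "(c,d) = (a,b)" using sep[OF assms cd(1) ab(2)] by blast
      qed
      have ex1: "\<exists>!p. inB n (fst p) (snd p) \<and> eqA n (mon i j :: 'k poly2) (mon (fst p) (snd p))"
      proof (rule ex1I[of _ "(a,b)"])
        show "inB n (fst (a,b)) (snd (a,b)) \<and> eqA n (mon i j :: 'k poly2) (mon (fst (a,b)) (snd (a,b)))"
          using ab by simp
      next
        fix p assume "inB n (fst p) (snd p) \<and> eqA n (mon i j :: 'k poly2) (mon (fst p) (snd p))"
        then show "p = (a,b)" using uniq[of "fst p" "snd p"] by auto
      qed
      have rel: "\<forall>i' j'. inB n i' j' \<and> eqA n (mon i j :: 'k poly2) (mon i' j') \<longrightarrow>
                   (\<exists>R\<in>relations n. (i, j) \<in> R \<and> (i', j') \<in> R)"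
        using uniq rel_ex[OF assms nB nzd ab(1)] by auto
      show ?thesis unfolding Let_def using nP1 nB nzd ex1 rel by simp
    qed
  qed
qed

end
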